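(* Let $ABC$ be a triangle with Nagel point $N$. Let $A_0, B_0, C_0$ be the points where the $A$-, $B$-, $C$-excircles touch the sides $BC, CA, AB$ respectively. Let $d>0$ and consider six points $A_1, A_2$ on line $BC$, $B_1, B_2$ on line $CA$, $C_1, C_2$ on line $AB$ such that \[ A_1A_0 = A_2A_0 = B_1B_0 = B_2B_0 = C_1C_0 = C_2C_0 = d, \] where $A_1, B_1, C_1$ lie on the rays $A_0C, B_0A, C_0B$ and $A_2, C_2, B_2$ lie on the rays $A_0B, C_0A, B_0C$ respectively. Then the radical axis of the circumcircles $\odot(A_1B_1C_1)$ and $\odot(A_2B_2C_2)$ passes through the Nagel point $N$, the centroid, and the incenter of $ABC$.
   Context: The Nagel point of $ABC$ is the common point of the lines $AA_0, BB_0, CC_0$ joining each vertex to the touch point of the opposite excircle with the opposite side. *)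

theory Defs
  imports "HOL-Analysis.Analysis"
begin

definition gline :: "real^2 \<Rightarrow> real^2 \<Rightarrow> (real^2) set" where
  "gline P Q = affine hull {P, Q}"

definition ray :: "real^2 \<Rightarrow> real^2 \<Rightarrow> (real^2) set" where
  "ray P Q = {P + t *\<^sub>R (Q - P) | t. t \<ge> 0}"

text \<open>J is the centre of the excircle opposite A: equidistant from the three side lines
  and strictly on the other side of line BC than A.\<close>
definition is_excenter :: "real^2 \<Rightarrow> real^2 \<Rightarrow> real^2 \<Rightarrow> real^2 \<Rightarrow> bool" where
  "is_excenter A B C J \<longleftrightarrow>
     infdist J (gline B C) = infdist J (gline C A) \<and>
     infdist J (gline C A) = infdist J (gline A B) \<and>
     J \<notin> gline B C \<and> closed_segment A J \<inter> gline B C \<noteq> {}"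

definition is_incenter :: "real^2 \<Rightarrow> real^2 \<Rightarrow> real^2 \<Rightarrow> real^2 \<Rightarrow> bool" where
  "is_incenter A B C I \<longleftrightarrow>
     I \<in> convex hull {A, B, C} \<and>
     infdist I (gline B C) = infdist I (gline C A) \<and>
     infdist I (gline C A) = infdist I (gline A B)"

definition touch_point :: "real^2 \<Rightarrow> real^2 \<Rightarrow> real^2 \<Rightarrow> real^2 \<Rightarrow> bool" where
  "touch_point J P Q X \<longleftrightarrow> X \<in> gline P Q \<and> dist J X = infdist J (gline P Q)"

definition is_circumcenter :: "real^2 \<Rightarrow> real^2 \<Rightarrow> real^2 \<Rightarrow> real^2 \<Rightarrow> bool" where
  "is_circumcenter X Y Z Q \<longleftrightarrow> \<not> collinear {X, Y, Z} \<and> dist Q X = dist Q Y \<and> dist Q Y = dist Q Z"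

definition power :: "real^2 \<Rightarrow> real^2 \<Rightarrow> real \<Rightarrow> real" where
  "power P Q r = (dist P Q)\<^sup>2 - r\<^sup>2"

definition radical_axis :: "real^2 \<Rightarrow> real \<Rightarrow> real^2 \<Rightarrow> real \<Rightarrow> (real^2) set" where
  "radical_axis O1 r1 O2 r2 = {P. power P O1 r1 = power P O2 r2}"

end

theory Submission
  imports Defs
begin

definition cross2 :: "real^2 \<Rightarrow> real^2 \<Rightarrow> real" where
  "cross2 p q = p$1 * q$2 - p$2 * q$1"

lemma vec2_eq: "(x::real^2) = y \<longleftrightarrow> x$1 = y$1 \<and> x$2 = y$2"
  by (simp add: vec_eq_iff forall_2)

lemma dist2: "(dist (P::real^2) Q)^2 = (P$1-Q$1)^2 + (P$2-Q$2)^2"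
proof -
  have "(dist P Q)^2 = (P - Q) \<bullet> (P - Q)" by (simp add: dist_norm power2_norm_eq_inner)
  also have "\<dots> = (P$1-Q$1)^2 + (P$2-Q$2)^2" by (simp add: inner_vec_def sum_2 power2_eq_square)
  finally show ?thesis .
qed

lemma inner2: "(P::real^2) \<bullet> Q = P$1*Q$1 + P$2*Q$2"
  by (simp add: inner_vec_def sum_2)

lemma gline_iff: "X \<in> gline B C \<longleftrightarrow> (\<exists>t. X = B + t *\<^sub>R (C - B))"
proof -
  have "X \<in> gline B C \<longleftrightarrow> (\<exists>u v. X = u *\<^sub>R B + v *\<^sub>R C \<and> u + v = 1)"
    unfolding gline_def affine_hull_2 by blast
  also have "\<dots> \<longleftrightarrow> (\<exists>t. X = B + t *\<^sub>R (C - B))"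
  proof
    assume "\<exists>u v. X = u *\<^sub>R B + v *\<^sub>R C \<and> u + v = 1"
    then obtain u v where "X = u *\<^sub>R B + v *\<^sub>R C" "u + v = 1" by blast
    then have "X = B + v *\<^sub>R (C - B)" by (simp add: algebra_simps flip: scaleR_add_left)
    then show "\<exists>t. X = B + t *\<^sub>R (C - B)" by blast
  next
    assume "\<exists>t. X = B + t *\<^sub>R (C - B)"
    then obtain t where "X = B + t *\<^sub>R (C - B)" by blast
    then have "X = (1 - t) *\<^sub>R B + t *\<^sub>R C \<and> (1 - t) + t = 1" by (simp add: algebra_simps)
    then show "\<exists>u v. X = u *\<^sub>R B + v *\<^sub>R C \<and> u + v = 1" by blast
  qed
  finally show ?thesis .
qed

lemma cross0_par:
  assumes h: "cross2 p q = 0" and n: "p \<noteq> 0"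
  shows "\<exists>c. q = c *\<^sub>R (p::real^2)"
proof -
  have "p$1 \<noteq> 0 \<or> p$2 \<noteq> 0" using n by (simp add: vec2_eq)
  then show ?thesis
  proof
    assume n: "p$1 \<noteq> 0"
    have "q$1 = (q$1/p$1) * p$1" "q$2 = (q$1/p$1) * p$2"
      using h n unfolding cross2_def by (auto simp: field_simps)
    then have "q = (q$1/p$1) *\<^sub>R p" unfolding vec2_eq by simp
    then show ?thesis by blast
  next
    assume n: "p$2 \<noteq> 0"
    have "q$1 = (q$2/p$2) * p$1" "q$2 = (q$2/p$2) * p$2"
      using h n unfolding cross2_def by (auto simp: field_simps)
    then have "q = (q$2/p$2) *\<^sub>R p" unfolding vec2_eq by simp
    then show ?thesis by blast
  qed
qed

lemma noncol_cross:
  assumes "\<not> collinear {A, B, C::real^2}"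
  shows "cross2 (B - A) (C - A) \<noteq> 0"
proof
  assume h: "cross2 (B - A) (C - A) = 0"
  have "collinear {0, B - A, C - A}"
  proof (cases "B - A = 0")
    case True then show ?thesis unfolding collinear_lemma by blast
  next
    case False
    then show ?thesis using cross0_par[OF h False] unfolding collinear_lemma by blast
  qed
  then have "collinear {B, A, C}" by (subst collinear_3) auto
  then show False using assms by (simp add: insert_commute)
qed


lemma cramer_vec:
  assumes "D = cross2 b c" "D \<noteq> 0"
  shows "(p::real^2) = (cross2 p c / D) *\<^sub>R b + (cross2 b p / D) *\<^sub>R c"
proof -
  have "D *\<^sub>R p = cross2 p c *\<^sub>R b + cross2 b p *\<^sub>R c"
    unfolding vec2_eq assms(1) cross2_def by (simp add: algebra_simps)
  then have "p = (1/D) *\<^sub>R (cross2 p c *\<^sub>R b + cross2 b p *\<^sub>R c)"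
    using assms(2) by (metis divide_inverse_commute divide_self_if mult_1 scaleR_one scaleR_scaleR)
  then show ?thesis by (simp add: scaleR_add_right)
qed

lemma bary_exists:
  assumes "\<not> collinear {A, B, C::real^2}"
  shows "\<exists>\<alpha> \<beta> \<gamma>. \<alpha> + \<beta> + \<gamma> = 1 \<and> P = \<alpha> *\<^sub>R A + \<beta> *\<^sub>R B + \<gamma> *\<^sub>R C"
proof -
  define D where "D = cross2 (B - A) (C - A)"
  have D: "D \<noteq> 0" using noncol_cross[OF assms] D_def by simp
  define \<beta> where "\<beta> = cross2 (P - A) (C - A) / D"
  define \<gamma> where "\<gamma> = cross2 (B - A) (P - A) / D"
  have "P - A = \<beta> *\<^sub>R (B - A) + \<gamma> *\<^sub>R (C - A)"
    unfolding \<beta>_def \<gamma>_def by (rule cramer_vec[OF D_def D])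
  then have "P = (1 - \<beta> - \<gamma>) *\<^sub>R A + \<beta> *\<^sub>R B + \<gamma> *\<^sub>R C"
    by (simp add: algebra_simps)
  then show ?thesis by (intro exI[of _ "1 - \<beta> - \<gamma>"] exI[of _ \<beta>] exI[of _ \<gamma>]) simp
qed

lemma bary_unique:
  assumes "\<not> collinear {A, B, C::real^2}"
    and "\<alpha> + \<beta> + \<gamma> = 1" "\<alpha>' + \<beta>' + \<gamma>' = 1"
    and "\<alpha> *\<^sub>R A + \<beta> *\<^sub>R B + \<gamma> *\<^sub>R C = \<alpha>' *\<^sub>R A + \<beta>' *\<^sub>R B + \<gamma>' *\<^sub>R C"
  shows "\<alpha> = \<alpha>' \<and> \<beta> = \<beta>' \<and> \<gamma> = \<gamma>'"
proof -
  define D where "D = cross2 (B - A) (C - A)"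
  have D: "D \<noteq> 0" using noncol_cross[OF assms(1)] D_def by simp
  have a: "\<alpha> = 1 - \<beta> - \<gamma>" "\<alpha>' = 1 - \<beta>' - \<gamma>'" using assms(2,3) by auto
  have e: "(\<beta> - \<beta>') * (B$1 - A$1) + (\<gamma> - \<gamma>') * (C$1 - A$1) = 0"
          "(\<beta> - \<beta>') * (B$2 - A$2) + (\<gamma> - \<gamma>') * (C$2 - A$2) = 0"
    using assms(4) unfolding vec2_eq a by (simp_all add: algebra_simps)
  have "(\<beta> - \<beta>') * D = 0"
  proof -
    have "(\<beta> - \<beta>') * D = ((\<beta> - \<beta>') * (B$1 - A$1) + (\<gamma> - \<gamma>') * (C$1 - A$1)) * (C$2 - A$2)
       - ((\<beta> - \<beta>') * (B$2 - A$2) + (\<gamma> - \<gamma>') * (C$2 - A$2)) * (C$1 - A$1)"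
      unfolding D_def cross2_def by (simp add: algebra_simps)
    then show ?thesis using e by simp
  qed
  moreover have "(\<gamma> - \<gamma>') * D = 0"
  proof -
    have "(\<gamma> - \<gamma>') * D = ((\<beta> - \<beta>') * (B$2 - A$2) + (\<gamma> - \<gamma>') * (C$2 - A$2)) * (B$1 - A$1)
       - ((\<beta> - \<beta>') * (B$1 - A$1) + (\<gamma> - \<gamma>') * (C$1 - A$1)) * (B$2 - A$2)"
      unfolding D_def cross2_def by (simp add: algebra_simps)
    then show ?thesis using e by simp
  qed
  ultimately show ?thesis using D a by auto
qed

lemma line_dist_real:
  assumes "e1^2 + e2^2 > (0::real)"
  shows "(m1 - t*e1)^2 + (m2 - t*e2)^2 = (m1*e2 - m2*e1)^2/(e1^2+e2^2)
     + (t - (m1*e1+m2*e2)/(e1^2+e2^2))^2*(e1^2+e2^2)"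
proof -
  define E where "E = e1^2 + e2^2"
  define dt where "dt = m1*e1+m2*e2"
  have E: "E > 0" using assms E_def by simp
  have 1: "(t - dt/E)^2*E = (t*E - dt)^2/E" using E by (simp add: field_simps power2_eq_square)
  have 2: "(m1*e2 - m2*e1)^2 + (t*E - dt)^2 = E*((m1 - t*e1)^2 + (m2 - t*e2)^2)"
    unfolding E_def dt_def by algebra
  have "(m1*e2 - m2*e1)^2/E + (t - dt/E)^2*E = ((m1 - t*e1)^2 + (m2 - t*e2)^2)"
    unfolding 1 add_divide_distrib[symmetric] 2 using E by simp
  then show ?thesis unfolding E_def dt_def by simp
qed


lemma dist_line_pt:
  assumes "B \<noteq> C" "Y = B + t *\<^sub>R (C - B)"
  shows "(dist P Y)^2 = (cross2 (C-B) (P-B))^2/(dist B C)^2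
     + (t - ((P-B) \<bullet> (C-B))/(dist B C)^2)^2 * (dist B C)^2"
proof -
  have a: "(dist B C)^2 = (C$1-B$1)^2 + (C$2-B$2)^2" unfolding dist2 by (simp add: power2_commute)
  have pos: "(C$1-B$1)^2 + (C$2-B$2)^2 > 0" unfolding a[symmetric] using assms(1) by simp
  have c: "(cross2 (C-B) (P-B))^2 = ((P$1-B$1)*(C$2-B$2) - (P$2-B$2)*(C$1-B$1))^2"
    unfolding cross2_def by (simp add: power2_commute algebra_simps)
  have i: "(P-B) \<bullet> (C-B) = (P$1-B$1)*(C$1-B$1) + (P$2-B$2)*(C$2-B$2)" unfolding inner2 by simp
  have y: "(dist P Y)^2 = ((P$1-B$1) - t*(C$1-B$1))^2 + ((P$2-B$2) - t*(C$2-B$2))^2"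
    unfolding dist2 assms(2) by (simp add: algebra_simps)
  show ?thesis unfolding y a c i by (rule line_dist_real[OF pos])
qed

lemma line_infdist:
  assumes "B \<noteq> C"
  shows "infdist P (gline B C) = \<bar>cross2 (C-B) (P-B)\<bar> / dist B C"
    and "X \<in> gline B C \<Longrightarrow> dist P X = infdist P (gline B C) \<Longrightarrow>
         X = B + (((P-B) \<bullet> (C-B))/(dist B C)^2) *\<^sub>R (C-B)"
proof -
  define t0 where "t0 = ((P-B) \<bullet> (C-B))/(dist B C)^2"
  define r where "r = \<bar>cross2 (C-B) (P-B)\<bar> / dist B C"
  have a: "dist B C > 0" using assms by simp
  have r2: "r^2 = (cross2 (C-B) (P-B))^2/(dist B C)^2" unfolding r_def by (simp add: power_divide)
  have r0: "r \<ge> 0" unfolding r_def using a by simp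
  have ge: "dist P Y \<ge> r" if Y: "Y \<in> gline B C" for Y
  proof -
    obtain t where t: "Y = B + t *\<^sub>R (C - B)" using Y gline_iff by blast
    have "(dist P Y)^2 \<ge> r^2" unfolding dist_line_pt[OF assms t] r2 t0_def[symmetric] by simp
    then show ?thesis by (rule power2_le_imp_le[OF _ zero_le_dist])
  qed
  define F where "F = B + t0 *\<^sub>R (C - B)"
  have F: "F \<in> gline B C" unfolding F_def gline_iff by blast
  have dF: "dist P F = r"
  proof -
    have "(dist P F)^2 = r^2" unfolding dist_line_pt[OF assms F_def] r2 t0_def[symmetric] by simp
    then show ?thesis using r0 by (simp add: power2_eq_iff_nonneg)
  qed
  have ne: "gline B C \<noteq> {}" using F by blast
  have inf: "infdist P (gline B C) = r"
  proof (rule antisym)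
    show "infdist P (gline B C) \<le> r" using infdist_le[OF F, of P] dF by simp
    show "r \<le> infdist P (gline B C)" unfolding infdist_notempty[OF ne]
      by (rule cINF_greatest[OF ne]) (rule ge)
  qed
  then show "infdist P (gline B C) = \<bar>cross2 (C-B) (P-B)\<bar> / dist B C" unfolding r_def .
  assume X: "X \<in> gline B C" "dist P X = infdist P (gline B C)"
  obtain t where t: "X = B + t *\<^sub>R (C - B)" using X(1) gline_iff by blast
  have "(dist P X)^2 = r^2" using X(2) inf by simp
  then have "(t - t0)^2 * (dist B C)^2 = 0" unfolding dist_line_pt[OF assms t] r2 t0_def[symmetric] by simp
  then have "t = t0" using a by simp
  then show "X = B + (((P-B) \<bullet> (C-B))/(dist B C)^2) *\<^sub>R (C-B)" using t t0_def by simp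
qed

lemma noncol_distinct:
  assumes "\<not> collinear {A, B, C::real^2}"
  shows "A \<noteq> B" "B \<noteq> C" "C \<noteq> A"
  using assms collinear_2 by (auto simp: insert_commute)

lemma cross_bary:
  assumes "\<alpha> + \<beta> + \<gamma> = 1" "J = \<alpha> *\<^sub>R A + \<beta> *\<^sub>R B + \<gamma> *\<^sub>R C"
  shows "cross2 (C-B) (J-B) = \<alpha> * cross2 (B - A) (C - A)"
    "cross2 (A-C) (J-C) = \<beta> * cross2 (B - A) (C - A)"
    "cross2 (B-A) (J-A) = \<gamma> * cross2 (B - A) (C - A)"
proof -
  have g: "\<gamma> = 1 - \<alpha> - \<beta>" using assms(1) by simp
  have J: "J$1 = \<alpha> * A$1 + \<beta> * B$1 + (1 - \<alpha> - \<beta>) * C$1" "J$2 = \<alpha> * A$2 + \<beta> * B$2 + (1 - \<alpha> - \<beta>) * C$2"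
    using assms(2) g by simp_all
  show "cross2 (C-B) (J-B) = \<alpha> * cross2 (B - A) (C - A)"
    "cross2 (A-C) (J-C) = \<beta> * cross2 (B - A) (C - A)"
    "cross2 (B-A) (J-A) = \<gamma> * cross2 (B - A) (C - A)"
    unfolding cross2_def g by (simp_all add: J algebra_simps)
qed

lemma excenter_touch:
  assumes tri: "\<not> collinear {A, B, C::real^2}" and ex: "is_excenter A B C J"
    and tp: "touch_point J B C X"
  shows "X = B + ((dist B C + dist C A - dist A B)/(2*dist B C)) *\<^sub>R (C - B)"
    and "dist C A + dist A B - dist B C > 0"
proof -
  define a where "a = dist B C"
  define b where "b = dist C A"
  define c where "c = dist A B"
  have ne: "A \<noteq> B" "B \<noteq> C" "C \<noteq> A" using noncol_distinct[OF tri] by auto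
  have pa: "a > 0" "b > 0" "c > 0" using ne a_def b_def c_def by auto
  define D where "D = cross2 (B - A) (C - A)"
  have D: "D \<noteq> 0" using noncol_cross[OF tri] D_def by simp
  obtain \<alpha> \<beta> \<gamma> where s: "\<alpha> + \<beta> + \<gamma> = 1" and J: "J = \<alpha> *\<^sub>R A + \<beta> *\<^sub>R B + \<gamma> *\<^sub>R C"
    using bary_exists[OF tri] by blast
  note cr = cross_bary[OF s J, folded D_def]
  have i1: "infdist J (gline B C) = \<bar>\<alpha>\<bar> * \<bar>D\<bar> / a"
    using line_infdist(1)[OF ne(2), of J] cr(1) a_def by (simp add: abs_mult)
  have i2: "infdist J (gline C A) = \<bar>\<beta>\<bar> * \<bar>D\<bar> / b"
    using line_infdist(1)[OF ne(3), of J] cr(2) b_def by (simp add: abs_mult)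
  have i3: "infdist J (gline A B) = \<bar>\<gamma>\<bar> * \<bar>D\<bar> / c"
    using line_infdist(1)[OF ne(1), of J] cr(3) c_def by (simp add: abs_mult)
  have h1: "\<bar>\<alpha>\<bar> / a * \<bar>D\<bar> = \<bar>\<beta>\<bar> / b * \<bar>D\<bar>" and h2: "\<bar>\<beta>\<bar> / b * \<bar>D\<bar> = \<bar>\<gamma>\<bar> / c * \<bar>D\<bar>"
    using ex i1 i2 i3 unfolding is_excenter_def by simp_all
  have Dn: "\<bar>D\<bar> \<noteq> 0" using D by simp
  have e1: "\<bar>\<alpha>\<bar> / a = \<bar>\<beta>\<bar> / b" by (rule mult_right_cancel[OF Dn, THEN iffD1, OF h1])
  have e2: "\<bar>\<beta>\<bar> / b = \<bar>\<gamma>\<bar> / c" by (rule mult_right_cancel[OF Dn, THEN iffD1, OF h2])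
  have an: "\<alpha> \<noteq> 0"
  proof
    assume "\<alpha> = 0"
    then have "J = B + \<gamma> *\<^sub>R (C - B)" using J s by (simp add: algebra_simps flip: scaleR_add_left)
    then show False using ex unfolding is_excenter_def gline_iff by blast
  qed
  obtain Y where Y1: "Y \<in> closed_segment A J" and Y2: "Y \<in> gline B C"
    using ex unfolding is_excenter_def by blast
  obtain l where l: "0 \<le> l" "l \<le> 1" "Y = (1 - l) *\<^sub>R A + l *\<^sub>R J"
    using Y1 unfolding closed_segment_def by blast
  obtain t where t: "Y = B + t *\<^sub>R (C - B)" using Y2 gline_iff by blast
  have "(1 - l + l * \<alpha>) *\<^sub>R A + (l * \<beta>) *\<^sub>R B + (l * \<gamma>) *\<^sub>R C = 0 *\<^sub>R A + (1 - t) *\<^sub>R B + t *\<^sub>R C"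
    using l(3) t J by (simp add: algebra_simps)
  moreover have "(1 - l + l * \<alpha>) + (l * \<beta>) + (l * \<gamma>) = 1"
  proof -
    have "(1 - l + l * \<alpha>) + (l * \<beta>) + (l * \<gamma>) = 1 - l + l * (\<alpha> + \<beta> + \<gamma>)" by (simp add: algebra_simps)
    then show ?thesis using s by simp
  qed
  moreover have "0 + (1 - t) + t = 1" by simp
  ultimately have "1 - l + l * \<alpha> = 0" using bary_unique[OF tri] by blast
  then have aneg: "\<alpha> < 0"
  proof -
    assume h: "1 - l + l * \<alpha> = 0"
    show "\<alpha> < 0"
    proof (rule ccontr)
      assume "\<not> \<alpha> < 0"
      then have "\<alpha> > 0" using an by simp
      then have "l * \<alpha> \<ge> 0" using l by simp
      then have "l = 1" "l * \<alpha> = 0" using h l by linarith+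
      then show False using \<open>\<alpha> > 0\<close> by simp
    qed
  qed
  define k where "k = - \<alpha> / a"
  have k: "k > 0" using aneg pa unfolding k_def by (simp add: field_simps)
  have al: "\<alpha> = - k * a" unfolding k_def using pa by simp
  have bb: "\<bar>\<beta>\<bar> = k * b" using e1 al pa k by (simp add: field_simps abs_mult)
  have cc: "\<bar>\<gamma>\<bar> = k * c" using e1 e2 al pa k by (simp add: field_simps abs_mult)
  have tr: "a \<le> b + c" "b \<le> c + a" "c \<le> a + b" unfolding a_def b_def c_def
    by (metis dist_commute dist_triangle add.commute)+
  have ktr: "k*a \<le> k*b + k*c" "k*b \<le> k*c + k*a" "k*c \<le> k*a + k*b" "k*a > 0" "k*b > 0" "k*c > 0"
    using mult_left_mono[OF tr(1), of k] mult_left_mono[OF tr(2), of k] mult_left_mono[OF tr(3), of k] k pa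
    by (simp_all add: distrib_left)
  have bpos: "\<beta> \<ge> 0"
  proof (rule ccontr)
    assume "\<not> \<beta> \<ge> 0"
    then have "\<beta> = - (k * b)" using bb by simp
    then have "\<gamma> > 0" using s al ktr by simp
    then have "\<gamma> = k * c" using cc by simp
    then show False using s al ktr \<open>\<beta> = - (k * b)\<close> by simp
  qed
  have gpos: "\<gamma> \<ge> 0"
  proof (rule ccontr)
    assume "\<not> \<gamma> \<ge> 0"
    then have "\<gamma> = - (k * c)" using cc by simp
    then have "\<beta> > 0" using s al ktr by simp
    then have "\<beta> = k * b" using bb by simp
    then show False using s al ktr \<open>\<gamma> = - (k * c)\<close> by simp
  qed
  have be: "\<beta> = k * b" using bb bpos by simp
  have ga: "\<gamma> = k * c" using cc gpos by simp
  have k1: "k * (b + c - a) = 1" using s al be ga by (simp add: algebra_simps)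
  show "dist C A + dist A B - dist B C > 0" unfolding a_def[symmetric] b_def[symmetric] c_def[symmetric]
    
  proof (rule ccontr)
    assume "\<not> b + c - a > 0"
    then have "k * (b + c - a) \<le> 0" using k by (simp add: mult_nonneg_nonpos)
    then show False using k1 by simp
  qed
  have X: "X = B + (((J-B) \<bullet> (C-B))/a^2) *\<^sub>R (C-B)"
    using line_infdist(2)[OF ne(2)] tp unfolding touch_point_def a_def by blast
  have JB: "J - B = \<alpha> *\<^sub>R (A - B) + \<gamma> *\<^sub>R (C - B)"
  proof -
    have b: "\<beta> = 1 - \<alpha> - \<gamma>" using s by simp
    show ?thesis unfolding vec2_eq J b by (simp add: algebra_simps)
  qed
  have a2: "a^2 = (C - B) \<bullet> (C - B)" unfolding a_def dist2 inner2 by (simp add: power2_eq_square algebra_simps)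
  have pol: "2 * ((A - B) \<bullet> (C - B)) = a^2 + c^2 - b^2"
    unfolding a_def b_def c_def dist2 inner2 by (simp add: algebra_simps power2_eq_square)
  have "2 * ((J-B) \<bullet> (C-B)) = \<alpha> * (2 * ((A - B) \<bullet> (C - B))) + 2 * \<gamma> * a^2"
    unfolding JB a2 by (simp add: inner_add_left algebra_simps)
  also have "\<dots> = k * (b + c - a) * (a * (a + b - c))" unfolding pol al ga by algebra
  finally have "(J-B) \<bullet> (C-B) = a * (a + b - c) / 2" unfolding k1 by simp
  then have "((J-B) \<bullet> (C-B))/a^2 = (a + b - c)/(2*a)" using pa by (simp add: field_simps power2_eq_square)
  then show "X = B + ((dist B C + dist C A - dist A B)/(2*dist B C)) *\<^sub>R (C - B)"
    using X unfolding a_def b_def c_def by simp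
qed

lemma incenter_bary:
  assumes tri: "\<not> collinear {A, B, C::real^2}" and inc: "is_incenter A B C I"
  shows "I = (dist B C / (dist B C + dist C A + dist A B)) *\<^sub>R A
           + (dist C A / (dist B C + dist C A + dist A B)) *\<^sub>R B
           + (dist A B / (dist B C + dist C A + dist A B)) *\<^sub>R C"
proof -
  define a where "a = dist B C"
  define b where "b = dist C A"
  define c where "c = dist A B"
  have ne: "A \<noteq> B" "B \<noteq> C" "C \<noteq> A" using noncol_distinct[OF tri] by auto
  have pa: "a > 0" "b > 0" "c > 0" using ne a_def b_def c_def by auto
  define D where "D = cross2 (B - A) (C - A)"
  have D: "D \<noteq> 0" using noncol_cross[OF tri] D_def by simp
  obtain \<alpha> \<beta> \<gamma> where nn: "0 \<le> \<alpha>" "0 \<le> \<beta>" "0 \<le> \<gamma>" and s: "\<alpha> + \<beta> + \<gamma> = 1"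
    and J: "I = \<alpha> *\<^sub>R A + \<beta> *\<^sub>R B + \<gamma> *\<^sub>R C"
    using inc unfolding is_incenter_def convex_hull_3 by blast
  note cr = cross_bary[OF s J, folded D_def]
  have i1: "infdist I (gline B C) = \<alpha> * \<bar>D\<bar> / a"
    using line_infdist(1)[OF ne(2), of I] cr(1) a_def nn by (simp add: abs_mult)
  have i2: "infdist I (gline C A) = \<beta> * \<bar>D\<bar> / b"
    using line_infdist(1)[OF ne(3), of I] cr(2) b_def nn by (simp add: abs_mult)
  have i3: "infdist I (gline A B) = \<gamma> * \<bar>D\<bar> / c"
    using line_infdist(1)[OF ne(1), of I] cr(3) c_def nn by (simp add: abs_mult)
  have h1: "\<alpha> / a * \<bar>D\<bar> = \<beta> / b * \<bar>D\<bar>" and h2: "\<beta> / b * \<bar>D\<bar> = \<gamma> / c * \<bar>D\<bar>"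
    using inc i1 i2 i3 unfolding is_incenter_def by simp_all
  have Dn: "\<bar>D\<bar> \<noteq> 0" using D by simp
  have e1: "\<alpha> / a = \<beta> / b" by (rule mult_right_cancel[OF Dn, THEN iffD1, OF h1])
  have e2: "\<beta> / b = \<gamma> / c" by (rule mult_right_cancel[OF Dn, THEN iffD1, OF h2])
  define k where "k = \<alpha> / a"
  have kb: "\<beta> / b = k" "\<gamma> / c = k" using e1 e2 unfolding k_def by simp_all
  have al: "\<alpha> = k * a" "\<beta> = k * b" "\<gamma> = k * c" using kb pa unfolding k_def by (simp_all add: field_simps)
  have k1: "k * (a + b + c) = 1" using s al by (simp add: algebra_simps)
  have p: "a + b + c > 0" using pa by simp
  have kk: "k = 1 / (a + b + c)" using k1 p by (simp add: field_simps)
  show ?thesis unfolding J al kk a_def[symmetric] b_def[symmetric] c_def[symmetric] by simp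
qed

lemma ray_pt:
  assumes "P \<noteq> Q" "Y \<in> ray P Q" "dist Y P = d"
  shows "Y = P + (d / dist P Q) *\<^sub>R (Q - P)"
proof -
  obtain t where t: "t \<ge> 0" "Y = P + t *\<^sub>R (Q - P)" using assms(2) unfolding ray_def by blast
  have "dist Y P = t * dist P Q" using t by (simp add: dist_norm norm_minus_commute)
  then have "t = d / dist P Q" using assms(1,3) by (simp add: field_simps)
  then show ?thesis using t by simp
qed

lemma side_ray:
  assumes bc: "B \<noteq> C" and a: "a = dist B C" and vw: "v + w = a" "v > 0" "w > 0"
    and X: "X = B + (w / a) *\<^sub>R (C - B)"
  shows "Y \<in> ray X C \<Longrightarrow> dist Y X = d \<Longrightarrow> Y = ((v - d) / a) *\<^sub>R B + ((w + d) / a) *\<^sub>R C"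
    and "Y \<in> ray X B \<Longrightarrow> dist Y X = d \<Longrightarrow> Y = ((v + d) / a) *\<^sub>R B + ((w - d) / a) *\<^sub>R C"
proof -
  have pa: "a > 0" using a bc by simp
  have CX: "C - X = (v / a) *\<^sub>R (C - B)"
  proof -
    have "C - X = (1 - w / a) *\<^sub>R (C - B)" unfolding X by (simp add: algebra_simps)
    moreover have "1 - w / a = v / a" using vw pa by (simp add: field_simps)
    ultimately show ?thesis by simp
  qed
  have BX: "B - X = (- (w / a)) *\<^sub>R (C - B)" unfolding X by (simp add: algebra_simps)
  have dXC: "dist X C = v" using CX pa vw a by (simp add: dist_norm norm_minus_commute dist_commute)
  have dXB: "dist X B = w" using BX pa vw a by (simp add: dist_norm norm_minus_commute dist_commute)
  have XC: "X \<noteq> C" using dXC vw by auto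
  have XB: "X \<noteq> B" using dXB vw by auto
  show "Y \<in> ray X C \<Longrightarrow> dist Y X = d \<Longrightarrow> Y = ((v - d) / a) *\<^sub>R B + ((w + d) / a) *\<^sub>R C"
  proof -
    assume "Y \<in> ray X C" "dist Y X = d"
    then have "Y = X + (d / v) *\<^sub>R (C - X)" using ray_pt[OF XC] dXC by simp
    also have "\<dots> = B + ((w + d) / a) *\<^sub>R (C - B)"
    proof -
      have "(d / v) *\<^sub>R ((v / a) *\<^sub>R (C - B)) = (d / a) *\<^sub>R (C - B)" using vw by simp
      then have "X + (d / v) *\<^sub>R (C - X) = B + ((w / a) + (d / a)) *\<^sub>R (C - B)"
        unfolding CX unfolding X scaleR_add_left by simp
      then show ?thesis by (simp add: add_divide_distrib)
    qed
    also have "\<dots> = ((v - d) / a) *\<^sub>R B + ((w + d) / a) *\<^sub>R C"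
    proof -
      have h: "(v - d) / a = 1 - (w + d) / a" using vw pa by (simp add: field_simps)
      show ?thesis unfolding h by (simp add: algebra_simps)
    qed
    finally show ?thesis .
  qed
  show "Y \<in> ray X B \<Longrightarrow> dist Y X = d \<Longrightarrow> Y = ((v + d) / a) *\<^sub>R B + ((w - d) / a) *\<^sub>R C"
  proof -
    assume "Y \<in> ray X B" "dist Y X = d"
    then have "Y = X + (d / w) *\<^sub>R (B - X)" using ray_pt[OF XB] dXB by simp
    also have "\<dots> = B + ((w - d) / a) *\<^sub>R (C - B)"
    proof -
      have "(d / w) *\<^sub>R ((- (w / a)) *\<^sub>R (C - B)) = (- (d / a)) *\<^sub>R (C - B)" using vw by simp
      then have "X + (d / w) *\<^sub>R (B - X) = B + ((w / a) + (- (d / a))) *\<^sub>R (C - B)"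
        unfolding BX unfolding X scaleR_add_left by simp
      then show ?thesis by (simp add: diff_divide_distrib)
    qed
    also have "\<dots> = ((v + d) / a) *\<^sub>R B + ((w - d) / a) *\<^sub>R C"
    proof -
      have h: "(v + d) / a = 1 - (w - d) / a" using vw pa by (simp add: field_simps)
      show ?thesis unfolding h by (simp add: algebra_simps)
    qed
    finally show ?thesis .
  qed
qed

lemma power_bary_real:
  assumes "al + be + ga = (1::real)"
  shows "(al * x + be * y + ga * z - xo)^2 = al * (x-xo)^2 + be * (y-xo)^2 + ga * (z-xo)^2
     - (be * ga * (y-z)^2 + ga * al * (z-x)^2 + al * be * (x-y)^2)"
proof -
  have g: "ga = 1 - al - be" using assms by simp
  show ?thesis unfolding g by algebra
qed

lemma power_bary:
  fixes A B C Oc :: "real^2"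
  assumes "al + be + ga = 1"
  shows "(dist (al *\<^sub>R A + be *\<^sub>R B + ga *\<^sub>R C) Oc)^2 = al * (dist A Oc)^2 + be * (dist B Oc)^2 + ga * (dist C Oc)^2
     - (be * ga * (dist B C)^2 + ga * al * (dist C A)^2 + al * be * (dist A B)^2)"
  unfolding dist2 using power_bary_real[OF assms, of "A$1" "B$1" "C$1" "Oc$1"] power_bary_real[OF assms, of "A$2" "B$2" "C$2" "Oc$2"]
  by (simp add: algebra_simps)

lemma side_power:
  fixes B C Y Oc :: "real^2"
  assumes "Y = (p/a) *\<^sub>R B + (q/a) *\<^sub>R C" "p + q = a" "a = dist B C" "a > 0" "dist Oc Y = R"
  shows "p  *  ((dist B Oc)^2 - R^2) + q  *  ((dist C Oc)^2 - R^2) = a  *  p  *  q"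
proof -
  have s: "0 + p/a + q/a = 1" using assms(2,4) by (simp add: field_simps)
  have "(dist Y Oc)^2 = (p/a) * (dist B Oc)^2 + (q/a) * (dist C Oc)^2 - (p/a) * (q/a) * a^2"
    using power_bary[OF s, of A B C Oc] unfolding assms(1) assms(3)[symmetric] by simp
  then have "a  *  R^2 = p * (dist B Oc)^2 + q * (dist C Oc)^2 - p * q * a"
    using assms(4,5) by (simp add: dist_commute field_simps power2_eq_square)
  moreover have "a  *  R^2 = p * R^2 + q * R^2" unfolding assms(2)[symmetric] by (simp add: distrib_right)
  ultimately show ?thesis by (simp add: algebra_simps)
qed

lemma lin_even:
  fixes u v w d x y z x' y' z' :: real
  assumes pos: "u > 0" "v > 0" "w > 0"
    and E1: "((v-d) * y + (w+d) * z) = ((v+w) * (v-d) * (w+d))" and E2: "((w-d) * z + (u+d) * x) = ((w+u) * (w-d) * (u+d))" and E3: "((u-d) * x + (v+d) * y) = ((u+v) * (u-d) * (v+d))"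
    and F1: "((v+d) * y' + (w-d) * z') = ((v+w) * (v+d) * (w-d))" and F2: "((w+d) * z' + (u-d) * x') = ((w+u) * (w+d) * (u-d))" and F3: "((u+d) * x' + (v-d) * y') = ((u+v) * (u+d) * (v-d))"
  shows "x + y + z = x' + y' + z'" and "(u * x) + (v  *  y) + (w * z) = (u * x') + (v  *  y') + (w * z')"
proof -
  define dt where "dt = ((u-d) * (v-d) * (w-d) + (u+d) * (v+d) * (w+d))"
  have dt2: "dt = ((u-(-d)) * (v-(-d)) * (w-(-d)) + (u+(-d)) * (v+(-d)) * (w+(-d)))" unfolding dt_def by algebra
  have dt3: "dt = 2 * (u * v * w) + 2 * (d^2 * (u+v+w))" unfolding dt_def by algebra
  have "u * v * w > 0" using pos by simp
  moreover have "d^2 * (u+v+w) \<ge> 0" using pos by simp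
  ultimately have dpos: "dt > 0" unfolding dt3 by linarith
  have "dt  *  (x+y+z) = (-(w-d) * (v+d) + (w-d) * (u-d) + (u+d) * (v+d)) * ((v-d) * y + (w+d) * z) + ((v-d) * (u-d) + (w+d) * (v+d) - (w+d) * (u-d)) * ((w-d) * z + (u+d) * x) + (-(v-d) * (u+d) + (v-d) * (w-d) + (w+d) * (u+d)) * ((u-d) * x + (v+d) * y)" unfolding dt_def by algebra
  also have "\<dots> = (-(w-d) * (v+d) + (w-d) * (u-d) + (u+d) * (v+d)) * ((v+w) * (v-d) * (w+d)) + ((v-d) * (u-d) + (w+d) * (v+d) - (w+d) * (u-d)) * ((w+u) * (w-d) * (u+d)) + (-(v-d) * (u+d) + (v-d) * (w-d) + (w+d) * (u+d)) * ((u+v) * (u-d) * (v+d))" unfolding E1 E2 E3 ..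
  also have "\<dots> = (-(w-(-d)) * (v+(-d)) + (w-(-d)) * (u-(-d)) + (u+(-d)) * (v+(-d))) * ((v+w) * (v+d) * (w-d)) + ((v-(-d)) * (u-(-d)) + (w+(-d)) * (v+(-d)) - (w+(-d)) * (u-(-d))) * ((w+u) * (w+d) * (u-d)) + (-(v-(-d)) * (u+(-d)) + (v-(-d)) * (w-(-d)) + (w+(-d)) * (u+(-d))) * ((u+v) * (u+d) * (v-d))" by algebra
  also have "\<dots> = (-(w-(-d)) * (v+(-d)) + (w-(-d)) * (u-(-d)) + (u+(-d)) * (v+(-d))) * ((v+d) * y' + (w-d) * z') + ((v-(-d)) * (u-(-d)) + (w+(-d)) * (v+(-d)) - (w+(-d)) * (u-(-d))) * ((w+d) * z' + (u-d) * x') + (-(v-(-d)) * (u+(-d)) + (v-(-d)) * (w-(-d)) + (w+(-d)) * (u+(-d))) * ((u+d) * x' + (v-d) * y')" unfolding F1 F2 F3 ..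
  also have "\<dots> = dt  *  (x'+y'+z')" unfolding dt2 by algebra
  finally show "x + y + z = x' + y' + z'" using dpos by simp
  have "dt  *  ((u * x) + (v  *  y) + (w * z)) = (u * (-(w-d) * (v+d)) + v * ((w-d) * (u-d)) + w * ((u+d) * (v+d))) * ((v-d) * y + (w+d) * z) + ((v-d) * w * (u-d) + (w+d) * (u * (v+d) - v * (u-d))) * ((w-d) * z + (u+d) * x) + (-(v-d) * ((u+d) * w - (w-d) * u) + (w+d) * ((u+d) * v)) * ((u-d) * x + (v+d) * y)" unfolding dt_def by algebra
  also have "\<dots> = (u * (-(w-d) * (v+d)) + v * ((w-d) * (u-d)) + w * ((u+d) * (v+d))) * ((v+w) * (v-d) * (w+d)) + ((v-d) * w * (u-d) + (w+d) * (u * (v+d) - v * (u-d))) * ((w+u) * (w-d) * (u+d)) + (-(v-d) * ((u+d) * w - (w-d) * u) + (w+d) * ((u+d) * v)) * ((u+v) * (u-d) * (v+d))" unfolding E1 E2 E3 ..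
  also have "\<dots> = (u * (-(w-(-d)) * (v+(-d))) + v * ((w-(-d)) * (u-(-d))) + w * ((u+(-d)) * (v+(-d)))) * ((v+w) * (v+d) * (w-d)) + ((v-(-d)) * w * (u-(-d)) + (w+(-d)) * (u * (v+(-d)) - v * (u-(-d)))) * ((w+u) * (w+d) * (u-d)) + (-(v-(-d)) * ((u+(-d)) * w - (w-(-d)) * u) + (w+(-d)) * ((u+(-d)) * v)) * ((u+v) * (u+d) * (v-d))" by algebra
  also have "\<dots> = (u * (-(w-(-d)) * (v+(-d))) + v * ((w-(-d)) * (u-(-d))) + w * ((u+(-d)) * (v+(-d)))) * ((v+d) * y' + (w-d) * z') + ((v-(-d)) * w * (u-(-d)) + (w+(-d)) * (u * (v+(-d)) - v * (u-(-d)))) * ((w+d) * z' + (u-d) * x') + (-(v-(-d)) * ((u+(-d)) * w - (w-(-d)) * u) + (w+(-d)) * ((u+(-d)) * v)) * ((u+d) * x' + (v-d) * y')" unfolding F1 F2 F3 ..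
  also have "\<dots> = dt  *  ((u * x') + (v  *  y') + (w * z'))" unfolding dt2 by algebra
  finally show "(u * x) + (v  *  y) + (w * z) = (u * x') + (v  *  y') + (w * z')" using dpos by simp
qed

lemma nagel_bary:
  fixes A B C A0 B0 N :: "real^2"
  assumes tri: "\<not> collinear {A, B, C}" and pos: "u > 0" "v > 0" "w > 0"
    and A0: "A0 = B + (w/(v+w)) *\<^sub>R (C - B)" and B0: "B0 = C + (u/(w+u)) *\<^sub>R (A - C)"
    and N1: "N \<in> gline A A0" and N2: "N \<in> gline B B0"
  shows "N = (u/(u+v+w)) *\<^sub>R A + (v/(u+v+w)) *\<^sub>R B + (w/(u+v+w)) *\<^sub>R C"
proof -
  obtain t where t: "N = A + t *\<^sub>R (A0 - A)" using N1 gline_iff by blast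
  obtain t' where t': "N = B + t' *\<^sub>R (B0 - B)" using N2 gline_iff by blast
  have vw: "v + w > 0" "w + u > 0" using pos by simp_all
  have Nt: "N = (1 - t) *\<^sub>R A + (t * (v/(v+w))) *\<^sub>R B + (t * (w/(v+w))) *\<^sub>R C"
  proof -
    have h: "v/(v+w) = 1 - w/(v+w)" using vw by (simp add: field_simps)
    show ?thesis unfolding t A0 h by (simp add: algebra_simps)
  qed
  have Nt': "N = (t' * (u/(w+u))) *\<^sub>R A + (1 - t') *\<^sub>R B + (t' * (w/(w+u))) *\<^sub>R C"
  proof -
    have h: "w/(w+u) = 1 - u/(w+u)" using vw by (simp add: field_simps)
    show ?thesis unfolding t' B0 h by (simp add: algebra_simps)
  qed
  have s1: "(1 - t) + t * (v/(v+w)) + t * (w/(v+w)) = 1"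
  proof -
    have "t * (v/(v+w)) + t * (w/(v+w)) = t * ((v+w)/(v+w))" by (simp only: add_divide_distrib distrib_left)
    then have "t * (v/(v+w)) + t * (w/(v+w)) = t" using vw by simp
    then show ?thesis by simp
  qed
  have s2: "t' * (u/(w+u)) + (1 - t') + t' * (w/(w+u)) = 1"
  proof -
    have "t' * (u/(w+u)) + t' * (w/(w+u)) = t' * ((u+w)/(w+u))" by (simp only: add_divide_distrib distrib_left)
    then have "t' * (u/(w+u)) + t' * (w/(w+u)) = t'" using vw by (simp add: add.commute)
    then show ?thesis by simp
  qed
  have e: "1 - t = t' * (u/(w+u))" "t * (v/(v+w)) = 1 - t'" "t * (w/(v+w)) = t' * (w/(w+u))"
    using bary_unique[OF tri s1 s2] Nt Nt' by auto
  have "w * (t * (w+u)) = w * (t' * (v+w))" using e(3) vw by (simp add: field_simps)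
  then have r: "t * (w+u) = t' * (v+w)" using pos by simp
  have "(1 - t) * (w+u) = t' * (u/(w+u)) * (w+u)" using e(1) by simp
  also have "\<dots> = t' * u" using vw by simp
  finally have h1: "(1 - t) * (w+u) = t' * u" .
  have "(1-t)*(v+w)*(w+u) = ((1-t)*(w+u))*(v+w)" by (simp only: mult_ac)
  also have "\<dots> = (t'*(v+w))*u" unfolding h1 by (simp only: mult_ac)
  also have "\<dots> = (t*(w+u))*u" unfolding r ..
  finally have h2: "(1-t)*(v+w)*(w+u) = (t*(w+u))*u" .
  have "((1 - t) * (v+w) - t * u) * (w+u) = 0" using h2 by (simp add: algebra_simps)
  then have h3: "(1 - t) * (v+w) = t * u" using vw by simp
  have e4: "(1-t)*(v+w) = (v+w) - t*(v+w)" "t*(u+v+w) = t*u + t*(v+w)" by (simp_all add: algebra_simps)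
  have "t * (u+v+w) = v+w" using h3 e4 by linarith
  moreover have "u+v+w \<noteq> 0" using pos by simp
  ultimately have tt: "t = (v+w)/(u+v+w)" by (simp add: eq_divide_eq)
  have c1: "1 - t = u/(u+v+w)" unfolding tt using pos by (simp add: field_simps)
  have vwn: "v + w \<noteq> 0" using vw by simp
  have c2: "t * (v/(v+w)) = v/(u+v+w)"
  proof -
    have "t * (v/(v+w)) = (v * (v+w))/((u+v+w)*(v+w))" unfolding tt by (simp add: mult.commute)
    then show ?thesis using nonzero_mult_divide_mult_cancel_right[OF vwn] by simp
  qed
  have c3: "t * (w/(v+w)) = w/(u+v+w)"
  proof -
    have "t * (w/(v+w)) = (w*(v+w))/((u+v+w)*(v+w))" unfolding tt by (simp add: mult.commute)
    then show ?thesis using nonzero_mult_divide_mult_cancel_right[OF vwn] by simp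
  qed
  show ?thesis using Nt unfolding c1 c2 c3 .
qed

lemma radical_bary:
  fixes P A B C O1 O2 :: "real^2"
  assumes s: "al + be + ga = 1" and P: "P = al *\<^sub>R A + be *\<^sub>R B + ga *\<^sub>R C"
    and d: "xa = (dist A O1)^2 - R1^2" "yb = (dist B O1)^2 - R1^2" "zc = (dist C O1)^2 - R1^2"
      "xa' = (dist A O2)^2 - R2^2" "yb' = (dist B O2)^2 - R2^2" "zc' = (dist C O2)^2 - R2^2"
    and z: "al * (xa - xa') + be * (yb - yb') + ga * (zc - zc') = 0"
  shows "P \<in> radical_axis O1 R1 O2 R2"
proof -
  have g: "ga = 1 - al - be" using s by simp
  have p1: "(dist P O1)^2 - R1^2 = al * xa + be * yb + ga * zc - (be*ga*(dist B C)^2 + ga*al*(dist C A)^2 + al*be*(dist A B)^2)"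
    unfolding P power_bary[OF s] d unfolding g by (simp add: algebra_simps)
  have p2: "(dist P O2)^2 - R2^2 = al * xa' + be * yb' + ga * zc' - (be*ga*(dist B C)^2 + ga*al*(dist C A)^2 + al*be*(dist A B)^2)"
    unfolding P power_bary[OF s] d unfolding g by (simp add: algebra_simps)
  have "(dist P O1)^2 - R1^2 = (dist P O2)^2 - R2^2" unfolding p1 p2 using z by (simp add: algebra_simps)
  then show ?thesis unfolding radical_axis_def power_def by simp
qed

theorem theorem1p1:
  fixes A B C JA JB JC A0 B0 C0 N I A1 A2 B1 B2 C1 C2 O1 O2 :: "real^2" and d :: real
  assumes tri: "\<not> collinear {A, B, C}"
    and exA: "is_excenter A B C JA" and exB: "is_excenter B C A JB" and exC: "is_excenter C A B JC"
    and tA: "touch_point JA B C A0" and tB: "touch_point JB C A B0" and tC: "touch_point JC A B C0"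
    and nagel: "N \<in> gline A A0" "N \<in> gline B B0" "N \<in> gline C C0"
    and inc: "is_incenter A B C I"
    and dpos: "d > 0"
    and A1: "A1 \<in> ray A0 C" "dist A1 A0 = d"
    and B1: "B1 \<in> ray B0 A" "dist B1 B0 = d"
    and C1: "C1 \<in> ray C0 B" "dist C1 C0 = d"
    and A2: "A2 \<in> ray A0 B" "dist A2 A0 = d"
    and B2: "B2 \<in> ray B0 C" "dist B2 B0 = d"
    and C2: "C2 \<in> ray C0 A" "dist C2 C0 = d"
    and O1: "is_circumcenter A1 B1 C1 O1"
    and O2: "is_circumcenter A2 B2 C2 O2"
  shows "N \<in> radical_axis O1 (dist O1 A1) O2 (dist O2 A2)
       \<and> (1/3) *\<^sub>R (A + B + C) \<in> radical_axis O1 (dist O1 A1) O2 (dist O2 A2)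
       \<and> I \<in> radical_axis O1 (dist O1 A1) O2 (dist O2 A2)"
proof -
  define a where "a = dist B C"
  define b where "b = dist C A"
  define c where "c = dist A B"
  have tri2: "\<not> collinear {B, C, A}" and tri3: "\<not> collinear {C, A, B}" using tri by (simp_all add: insert_commute)
  have ne: "A \<noteq> B" "B \<noteq> C" "C \<noteq> A" using noncol_distinct[OF tri] by auto
  have pa: "a > 0" "b > 0" "c > 0" using ne a_def b_def c_def by auto
  note XA = excenter_touch[OF tri exA tA, folded a_def b_def c_def]
  note XB = excenter_touch[OF tri2 exB tB, folded a_def b_def c_def]
  note XC = excenter_touch[OF tri3 exC tC, folded a_def b_def c_def]
  define u where "u = (b + c - a)/2"
  define v where "v = (c + a - b)/2"
  define w where "w = (a + b - c)/2"
  have pu: "u > 0" "v > 0" "w > 0" using XA(2) XB(2) XC(2) unfolding u_def v_def w_def by simp_all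
  have sides: "v + w = a" "w + u = b" "u + v = c" unfolding u_def v_def w_def by (simp_all add: field_simps)
  have A0: "A0 = B + (w / a) *\<^sub>R (C - B)" using XA(1) unfolding w_def by (simp add: add.commute)
  have B0: "B0 = C + (u / b) *\<^sub>R (A - C)" using XB(1) unfolding u_def by (simp add: add.commute)
  have C0: "C0 = A + (v / c) *\<^sub>R (B - A)" using XC(1) unfolding v_def by (simp add: add.commute)
  have A1e: "A1 = ((v - d) / a) *\<^sub>R B + ((w + d) / a) *\<^sub>R C"
    using side_ray(1)[OF ne(2) a_def sides(1) pu(2) pu(3) A0 A1] .
  have A2e: "A2 = ((v + d) / a) *\<^sub>R B + ((w - d) / a) *\<^sub>R C"
    using side_ray(2)[OF ne(2) a_def sides(1) pu(2) pu(3) A0 A2] .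
  have B1e: "B1 = ((w - d) / b) *\<^sub>R C + ((u + d) / b) *\<^sub>R A"
    using side_ray(1)[OF ne(3) b_def sides(2) pu(3) pu(1) B0 B1] .
  have B2e: "B2 = ((w + d) / b) *\<^sub>R C + ((u - d) / b) *\<^sub>R A"
    using side_ray(2)[OF ne(3) b_def sides(2) pu(3) pu(1) B0 B2] .
  have C1e: "C1 = ((u - d) / c) *\<^sub>R A + ((v + d) / c) *\<^sub>R B"
    using side_ray(1)[OF ne(1) c_def sides(3) pu(1) pu(2) C0 C1] .
  have C2e: "C2 = ((u + d) / c) *\<^sub>R A + ((v - d) / c) *\<^sub>R B"
    using side_ray(2)[OF ne(1) c_def sides(3) pu(1) pu(2) C0 C2] .
  define R1 where "R1 = dist O1 A1"
  define R2 where "R2 = dist O2 A2"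
  have r1: "dist O1 A1 = R1" "dist O1 B1 = R1" "dist O1 C1 = R1" using O1 unfolding is_circumcenter_def R1_def by simp_all
  have r2: "dist O2 A2 = R2" "dist O2 B2 = R2" "dist O2 C2 = R2" using O2 unfolding is_circumcenter_def R2_def by simp_all
  define x1 where "x1 = (dist A O1)^2 - R1^2"
  define y1 where "y1 = (dist B O1)^2 - R1^2"
  define z1 where "z1 = (dist C O1)^2 - R1^2"
  define x2 where "x2 = (dist A O2)^2 - R2^2"
  define y2 where "y2 = (dist B O2)^2 - R2^2"
  define z2 where "z2 = (dist C O2)^2 - R2^2"
  have E1: "(v - d) * y1 + (w + d) * z1 = (v + w) * (v - d) * (w + d)"
    using side_power[OF A1e _ a_def pa(1) r1(1)] sides(1) unfolding y1_def z1_def by (simp add: algebra_simps)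
  have E2: "(w - d) * z1 + (u + d) * x1 = (w + u) * (w - d) * (u + d)"
    using side_power[OF B1e _ b_def pa(2) r1(2)] sides(2) unfolding z1_def x1_def by (simp add: algebra_simps)
  have E3: "(u - d) * x1 + (v + d) * y1 = (u + v) * (u - d) * (v + d)"
    using side_power[OF C1e _ c_def pa(3) r1(3)] sides(3) unfolding x1_def y1_def by (simp add: algebra_simps)
  have F1: "(v + d) * y2 + (w - d) * z2 = (v + w) * (v + d) * (w - d)"
    using side_power[OF A2e _ a_def pa(1) r2(1)] sides(1) unfolding y2_def z2_def by (simp add: algebra_simps)
  have F2: "(w + d) * z2 + (u - d) * x2 = (w + u) * (w + d) * (u - d)"
    using side_power[OF B2e _ b_def pa(2) r2(2)] sides(2) unfolding z2_def x2_def by (simp add: algebra_simps)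
  have F3: "(u + d) * x2 + (v - d) * y2 = (u + v) * (u + d) * (v - d)"
    using side_power[OF C2e _ c_def pa(3) r2(3)] sides(3) unfolding x2_def y2_def by (simp add: algebra_simps)
  note L = lin_even[OF pu E1 E2 E3 F1 F2 F3]
  note defs = x1_def y1_def z1_def x2_def y2_def z2_def
  have s0: "u + v + w > 0" using pu by simp
  have "N = (u/(u+v+w)) *\<^sub>R A + (v/(u+v+w)) *\<^sub>R B + (w/(u+v+w)) *\<^sub>R C"
    using nagel_bary[OF tri pu _ _ nagel(1) nagel(2)] A0 B0 sides by simp
  moreover have "u/(u+v+w) + v/(u+v+w) + w/(u+v+w) = 1"
  proof -
    have "u/(u+v+w) + v/(u+v+w) + w/(u+v+w) = (u+v+w)/(u+v+w)" by (simp only: add_divide_distrib)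
    then show ?thesis using s0 by simp
  qed
  moreover have "u/(u+v+w) * (x1 - x2) + v/(u+v+w) * (y1 - y2) + w/(u+v+w) * (z1 - z2) = 0"
  proof -
    have "u/(u+v+w) * (x1 - x2) + v/(u+v+w) * (y1 - y2) + w/(u+v+w) * (z1 - z2)
        = (u * (x1 - x2) + v * (y1 - y2) + w * (z1 - z2)) / (u+v+w)"
      by (simp add: add_divide_distrib)
    moreover have "u * (x1 - x2) + v * (y1 - y2) + w * (z1 - z2) = 0" using L(2) by (simp add: algebra_simps)
    ultimately show ?thesis by simp
  qed
  ultimately have HN: "N \<in> radical_axis O1 R1 O2 R2"
    using radical_bary[OF _ _ defs] by blast
  have "(1/3) *\<^sub>R (A + B + C) = (1/3) *\<^sub>R A + (1/3) *\<^sub>R B + (1/3) *\<^sub>R C" by (simp add: scaleR_add_right)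
  moreover have "(1/3::real) + 1/3 + 1/3 = 1" by simp
  moreover have "(1/3) * (x1 - x2) + (1/3) * (y1 - y2) + (1/3) * (z1 - z2) = 0"
  proof -
    have "(1/3) * (x1 - x2) + (1/3) * (y1 - y2) + (1/3) * (z1 - z2) = (1/3) * ((x1 + y1 + z1) - (x2 + y2 + z2))"
      by (simp only: right_diff_distrib distrib_left)
    then show ?thesis using L(1) by simp
  qed
  ultimately have HG: "(1/3) *\<^sub>R (A + B + C) \<in> radical_axis O1 R1 O2 R2"
    using radical_bary[OF _ _ defs] by blast
  have p0: "a + b + c > 0" using pa by simp
  have "I = (a/(a+b+c)) *\<^sub>R A + (b/(a+b+c)) *\<^sub>R B + (c/(a+b+c)) *\<^sub>R C"
    using incenter_bary[OF tri inc] unfolding a_def b_def c_def .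
  moreover have "a/(a+b+c) + b/(a+b+c) + c/(a+b+c) = 1"
  proof -
    have "a/(a+b+c) + b/(a+b+c) + c/(a+b+c) = (a+b+c)/(a+b+c)" by (simp only: add_divide_distrib)
    then show ?thesis using p0 by simp
  qed
  moreover have "a/(a+b+c) * (x1 - x2) + b/(a+b+c) * (y1 - y2) + c/(a+b+c) * (z1 - z2) = 0"
  proof -
    have "a/(a+b+c) * (x1 - x2) + b/(a+b+c) * (y1 - y2) + c/(a+b+c) * (z1 - z2)
        = (a * (x1 - x2) + b * (y1 - y2) + c * (z1 - z2)) / (a+b+c)"
      by (simp add: add_divide_distrib)
    also have "a * (x1 - x2) + b * (y1 - y2) + c * (z1 - z2)
       = (u+v+w) * ((x1 + y1 + z1) - (x2 + y2 + z2)) - ((u * x1 + v * y1 + w * z1) - (u * x2 + v * y2 + w * z2))"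
      unfolding sides[symmetric] by (simp add: algebra_simps)
    finally show ?thesis using L by simp
  qed
  ultimately have HI: "I \<in> radical_axis O1 R1 O2 R2"
    using radical_bary[OF _ _ defs] by blast
  show ?thesis using HN HG HI unfolding R1_def R2_def by blast
qed

end
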